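(* There exist absolute constants $\bar\epsilon>0$ and $\delta>0$ such that for all real numbers $a,c$ and $b\ge 0$ satisfying $|ac|\le\bar\epsilon\,b^2$ and $|c|\le\bar\epsilon\,b^{3/2}$ one has $$\det S\ \ge\ \delta\, b^2(a^2+b),\qquad S=\frac13\begin{pmatrix}3&2a&-b\\ 2a&2(a^2+b)&-ab-3c\\ -b&-ab-3c&b^2-2ac\end{pmatrix}.$$ *)

theory Defs
  imports "HOL-Analysis.Analysis"
begin

definition Smat :: "real \<Rightarrow> real \<Rightarrow> real \<Rightarrow> real^3^3" where
  "Smat a b c = (1/3) *\<^sub>R
     vector [vector [3, 2*a, -b],
             vector [2*a, 2*(a^2+b), -a*b - 3*c],
             vector [-b, -a*b - 3*c, b^2 - 2*a*c]]"

end

theory Submission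
  imports Defs
begin

lemma detS: "det (Smat a b c) = (a^2*b^2 + 4*b^3 - 4*a^3*c - 18*a*b*c - 27*c^2)/27"
  unfolding Smat_def det_3 by (simp add: vector_3 field_simps power2_eq_square power3_eq_cube)

lemma powr_sq: "(b::real) \<ge> 0 \<Longrightarrow> (b powr (3/2))^2 = b^3"
proof -
  assume h: "b \<ge> 0"
  have "(b powr (3/2))^2 = b powr (3/2 + 3/2)"
    unfolding power2_eq_square powr_add[symmetric] by simp
  also have "\<dots> = b powr (real 3)" by simp
  also have "\<dots> = b^3" using h by (cases "b = 0") (simp_all add: powr_realpow)
  finally show ?thesis .
qed

theorem mainTheorem3:
  shows "\<exists>eps::real. \<exists>\<delta>::real. eps > 0 \<and> \<delta> > 0 \<and>
    (\<forall>a b c :: real. b \<ge> 0 \<longrightarrow> \<bar>a * c\<bar> \<le> eps * b^2 \<longrightarrow> \<bar>c\<bar> \<le> eps * b powr (3/2) \<longrightarrow>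
       det (Smat a b c) \<ge> \<delta> * b^2 * (a^2 + b))"
proof (rule exI[of _ "1/100"], rule exI[of _ "1/30"], intro conjI allI impI)
  fix a b c :: real
  assume b: "b \<ge> 0" and h1: "\<bar>a * c\<bar> \<le> 1/100 * b^2" and h2: "\<bar>c\<bar> \<le> 1/100 * b powr (3/2)"
  have c2: "c^2 \<le> (1/100)^2 * b^3"
  proof -
    have "c^2 = \<bar>c\<bar>^2" by simp
    also have "\<dots> \<le> (1/100 * b powr (3/2))^2" using h2 by (intro power_mono) auto
    also have "\<dots> = (1/100)^2 * b^3" using powr_sq[OF b] by (simp add: power_mult_distrib power_divide)
    finally show ?thesis .
  qed
  have t1: "4*a^3*c \<le> 4/100*(a^2*b^2)"
  proof -
    have "4*a^3*c = 4*a^2*(a*c)" by (simp add: power2_eq_square power3_eq_cube)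
    also have "\<dots> \<le> 4*a^2*\<bar>a*c\<bar>" by (intro mult_left_mono) auto
    also have "\<dots> \<le> 4*a^2 * (1/100*b^2)" using h1 by (intro mult_left_mono) auto
    finally show ?thesis by simp
  qed
  have t2: "18*a*b*c \<le> 18/100*b^3"
  proof -
    have "18*a*b*c = 18*b*(a*c)" by simp
    also have "\<dots> \<le> 18*b*\<bar>a*c\<bar>" using b by (intro mult_left_mono) auto
    also have "\<dots> \<le> 18*b*(1/100*b^2)" using h1 b by (intro mult_left_mono) auto
    finally show ?thesis by (simp add: power3_eq_cube power2_eq_square)
  qed
  have e: "1/30*b^2*(a^2+b) = (a^2*b^2 + b^3)/30" by (simp add: algebra_simps power3_eq_cube power2_eq_square)
  have Y: "0 \<le> b^3" using b by simp
  have X: "0 \<le> a^2*b^2" by simp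
  show "det (Smat a b c) \<ge> 1/30 * b^2 * (a^2 + b)"
  proof -
    have c3: "c^2 \<le> 1/10000 * b^3" using c2 by (simp add: power2_eq_square)
    have L: "\<And>X Y P Q C::real. P \<le> 4/100*X \<Longrightarrow> Q \<le> 18/100*Y \<Longrightarrow> C \<le> 1/10000*Y \<Longrightarrow> 0 \<le> X \<Longrightarrow> 0 \<le> Y
       \<Longrightarrow> (X+Y)/30 \<le> (X + 4*Y - P - Q - 27*C)/27" by (simp add: field_simps)
    show ?thesis unfolding detS e using L[OF t1 t2 c3 X Y] .
  qed
qed simp_all
end
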